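(* Consider the qubit generator families $$\mathcal L^{(1)}_t[\rho]=\gamma_1(t)\,(\sigma_x\rho\sigma_x-\rho),\qquad \mathcal L^{(2)}_t[\rho]=\gamma_2(t)\Big(\sigma_-\rho\sigma_+-\tfrac12\{\sigma_+\sigma_-,\rho\}\Big),$$ with $\sigma_\pm=(\sigma_x\pm\mathrm i\sigma_y)/2$. (a) If $\gamma_1(t)=\sin(2t)$ and $\gamma_2(t)=1$, then each of $\mathcal L^{(1)}$, $\mathcal L^{(2)}$ individually generates SSC dynamics consisting of CPTP maps for all $t\ge0$, but the family $\Lambda_t$ solving $\dot\Lambda_t=(\mathcal L^{(1)}_t+\mathcal L^{(2)}_t)\circ\Lambda_t$, $\Lambda_0=\mathrm{id}$, contains a map that is not completely positive (in particular $\Lambda_\pi$ is not completely positive). (b) If $\gamma_1(t)=1/2$ and $\gamma_2(t)=\sin t$, then again each of $\mathcal L^{(1)}$, $\mathcal L^{(2)}$ individually generates SSC dynamics consisting of CPTP maps for all $t\ge0$, but the map $\Lambda_{2\pi}$ generated by $\mathcal L^{(1)}_t+\mathcal L^{(2)}_t$ is not completely positive.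
   Context: $\sigma_x,\sigma_y,\sigma_z$ are the Pauli matrices. A family of generators $\mathcal L_t$ generates the maps $\Lambda_t$ solving $\dot\Lambda_t=\mathcal L_t\circ\Lambda_t$ with $\Lambda_0$ the identity. For a commutative family ($[\mathcal L_s,\mathcal L_t]=0$) one has $\Lambda_t=\exp(\mathcal Z_t)$ with $\mathcal Z_t=\int_0^t\mathcal L_\tau d\tau$; the dynamics is SSC (semigroup-simulable and commutative) if, in addition, each $\mathcal Z_t$ is of GKSL form, i.e. $\mathcal Z_t[\rho]=-\mathrm i[H,\rho]+\sum_{i,j}\mathsf D_{ij}(F_i\rho F_j^\dagger-\frac12\{F_j^\dagger F_i,\rho\})$ with $\mathsf D\ge0$ in an orthonormal traceless operator basis $\{F_i\}$. *)

theory Defs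
  imports "HOL-Analysis.Analysis"
begin

type_synonym qmat = "complex^2^2"

definition smat :: "complex \<Rightarrow> qmat \<Rightarrow> qmat" where
  "smat c A = (\<chi> i j. c * A$i$j)"

definition adj :: "qmat \<Rightarrow> qmat" where
  "adj A = (\<chi> i j. cnj (A$j$i))"

definition sigma_x :: qmat where
  "sigma_x = (\<chi> i j. if i = j then 0 else 1)"
definition sigma_y :: qmat where
  "sigma_y = (\<chi> i j. if i = j then 0 else if i = 1 then - \<i> else \<i>)"
definition sigma_z :: qmat where
  "sigma_z = (\<chi> i j. if i \<noteq> j then 0 else if i = 1 then 1 else -1)"

definition sigma_plus :: qmat where
  "sigma_plus = smat (1/2) (sigma_x + smat \<i> sigma_y)"
definition sigma_minus :: qmat where
  "sigma_minus = smat (1/2) (sigma_x - smat \<i> sigma_y)"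

definition gen1 :: "(real \<Rightarrow> real) \<Rightarrow> real \<Rightarrow> qmat \<Rightarrow> qmat" where
  "gen1 \<gamma> t \<rho> = smat (complex_of_real (\<gamma> t)) (sigma_x ** \<rho> ** sigma_x - \<rho>)"

definition gen2 :: "(real \<Rightarrow> real) \<Rightarrow> real \<Rightarrow> qmat \<Rightarrow> qmat" where
  "gen2 \<gamma> t \<rho> = smat (complex_of_real (\<gamma> t))
      (sigma_minus ** \<rho> ** sigma_plus
       - smat (1/2) (sigma_plus ** sigma_minus ** \<rho> + \<rho> ** sigma_plus ** sigma_minus))"

definition solves :: "(real \<Rightarrow> qmat \<Rightarrow> qmat) \<Rightarrow> (real \<Rightarrow> qmat \<Rightarrow> qmat) \<Rightarrow> bool" where
  "solves L \<Lambda> \<longleftrightarrow> \<Lambda> 0 = id \<and>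
     (\<forall>t\<ge>0. \<forall>\<rho>. ((\<lambda>s. \<Lambda> s \<rho>) has_vector_derivative L t (\<Lambda> t \<rho>)) (at t within {0..}))"

definition hform :: "complex^'n \<Rightarrow> complex^'n \<Rightarrow> complex" where
  "hform u w = (\<Sum>a\<in>UNIV. cnj (u$a) * w$a)"

definition nonneg_real :: "complex \<Rightarrow> bool" where
  "nonneg_real z \<longleftrightarrow> Im z = 0 \<and> 0 \<le> Re z"

definition psd :: "complex^'n^'n \<Rightarrow> bool" where
  "psd A \<longleftrightarrow> (\<forall>v. nonneg_real (hform v (A *v v)))"

(* An element of M_2 \<otimes> M_k, written as a k\<times>k block matrix of 2\<times>2 blocks X i j (i,j<k),
   is positive semidefinite *)
definition psd_block :: "nat \<Rightarrow> (nat \<Rightarrow> nat \<Rightarrow> qmat) \<Rightarrow> bool" where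
  "psd_block k X \<longleftrightarrow>
     (\<forall>v :: nat \<Rightarrow> complex^2. nonneg_real (\<Sum>i<k. \<Sum>j<k. hform (v i) (X i j *v v j)))"

(* complete positivity: \<Phi> \<otimes> id_k is positive for every k *)
definition completely_positive :: "(qmat \<Rightarrow> qmat) \<Rightarrow> bool" where
  "completely_positive \<Phi> \<longleftrightarrow>
     (\<forall>k X. psd_block k X \<longrightarrow> psd_block k (\<lambda>i j. \<Phi> (X i j)))"

definition trace_preserving :: "(qmat \<Rightarrow> qmat) \<Rightarrow> bool" where
  "trace_preserving \<Phi> \<longleftrightarrow> (\<forall>\<rho>. trace (\<Phi> \<rho>) = trace \<rho>)"

definition CPTP :: "(qmat \<Rightarrow> qmat) \<Rightarrow> bool" where
  "CPTP \<Phi> \<longleftrightarrow> linear \<Phi> \<and> completely_positive \<Phi> \<and> trace_preserving \<Phi>"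

definition Zint :: "(real \<Rightarrow> qmat \<Rightarrow> qmat) \<Rightarrow> real \<Rightarrow> qmat \<Rightarrow> qmat" where
  "Zint L t \<rho> = integral {0..t} (\<lambda>\<tau>. L \<tau> \<rho>)"

(* orthonormal (Hilbert-Schmidt) basis of traceless operators on C^2 (d^2-1 = 3 elements) *)
definition orthonormal_traceless_basis :: "(3 \<Rightarrow> qmat) \<Rightarrow> bool" where
  "orthonormal_traceless_basis F \<longleftrightarrow>
     (\<forall>i. trace (F i) = 0) \<and> (\<forall>i j. trace (adj (F i) ** F j) = (if i = j then 1 else 0))"

definition GKSL_form :: "(qmat \<Rightarrow> qmat) \<Rightarrow> bool" where
  "GKSL_form Z \<longleftrightarrow> (\<exists>H F (D :: complex^3^3).
     adj H = H \<and> orthonormal_traceless_basis F \<and> psd D \<and>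
     (\<forall>\<rho>. Z \<rho> = smat (- \<i>) (H ** \<rho> - \<rho> ** H)
        + (\<Sum>i\<in>UNIV. \<Sum>j\<in>UNIV. smat (D$i$j)
            (F i ** \<rho> ** adj (F j)
             - smat (1/2) (adj (F j) ** F i ** \<rho> + \<rho> ** adj (F j) ** F i)))))"

definition commutative_family :: "(real \<Rightarrow> qmat \<Rightarrow> qmat) \<Rightarrow> bool" where
  "commutative_family L \<longleftrightarrow> (\<forall>s\<ge>0. \<forall>t\<ge>0. L s \<circ> L t = L t \<circ> L s)"

(* semigroup-simulable and commutative *)
definition SSC :: "(real \<Rightarrow> qmat \<Rightarrow> qmat) \<Rightarrow> bool" where
  "SSC L \<longleftrightarrow> commutative_family L \<and> (\<forall>t\<ge>0. GKSL_form (Zint L t))"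

definition generates_SSC_CPTP :: "(real \<Rightarrow> qmat \<Rightarrow> qmat) \<Rightarrow> bool" where
  "generates_SSC_CPTP L \<longleftrightarrow> SSC L \<and> (\<exists>\<Lambda>. solves L \<Lambda>) \<and>
     (\<forall>\<Lambda>. solves L \<Lambda> \<longrightarrow> (\<forall>t\<ge>0. CPTP (\<Lambda> t)))"

end

theory Submission
  imports Defs
begin


definition mk :: "complex \<Rightarrow> complex \<Rightarrow> complex \<Rightarrow> complex \<Rightarrow> qmat" where
  "mk a b c d = (\<chi> i j. if i = 1 then (if j = 1 then a else b) else (if j = 1 then c else d))"

lemma mk_nth[simp]: "mk a b c d $ 1 $ 1 = a" "mk a b c d $ 1 $ 2 = b" "mk a b c d $ 2 $ 1 = c" "mk a b c d $ 2 $ 2 = d"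
  by (simp_all add: mk_def)

lemma qmat_eq_iff: "(A::qmat) = B \<longleftrightarrow> A$1$1 = B$1$1 \<and> A$1$2 = B$1$2 \<and> A$2$1 = B$2$1 \<and> A$2$2 = B$2$2"
  by (auto simp: vec_eq_iff forall_2)

lemma mmult_nth: "((A::qmat) ** B) $ i $ j = A$i$1 * B$1$j + A$i$2 * B$2$j"
  by (simp add: matrix_matrix_mult_def sum_2)

lemma sx_nth[simp]: "sigma_x$1$1 = 0" "sigma_x$1$2 = 1" "sigma_x$2$1 = 1" "sigma_x$2$2 = 0"
  by (simp_all add: sigma_x_def)
lemma sy_nth[simp]: "sigma_y$1$1 = 0" "sigma_y$1$2 = -\<i>" "sigma_y$2$1 = \<i>" "sigma_y$2$2 = 0"
  by (simp_all add: sigma_y_def)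
lemma sz_nth[simp]: "sigma_z$1$1 = 1" "sigma_z$1$2 = 0" "sigma_z$2$1 = 0" "sigma_z$2$2 = -1"
  by (simp_all add: sigma_z_def)
lemma smat_nth[simp]: "smat c A $ i $ j = c * A$i$j" by (simp add: smat_def)
lemma adj_nth[simp]: "adj A $ i $ j = cnj (A$j$i)" by (simp add: adj_def)
lemma sp_nth[simp]: "sigma_plus$1$1 = 0" "sigma_plus$1$2 = 1" "sigma_plus$2$1 = 0" "sigma_plus$2$2 = 0"
  by (simp_all add: sigma_plus_def)
lemma sm_nth[simp]: "sigma_minus$1$1 = 0" "sigma_minus$1$2 = 0" "sigma_minus$2$1 = 1" "sigma_minus$2$2 = 0"
  by (simp_all add: sigma_minus_def)

lemma gen1_nth[simp]:
  "gen1 g t r $1$1 = of_real (g t) * (r$2$2 - r$1$1)"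
  "gen1 g t r $1$2 = of_real (g t) * (r$2$1 - r$1$2)"
  "gen1 g t r $2$1 = of_real (g t) * (r$1$2 - r$2$1)"
  "gen1 g t r $2$2 = of_real (g t) * (r$1$1 - r$2$2)"
  by (simp_all add: gen1_def mmult_nth)

lemma gen2_nth[simp]:
  "gen2 g t r $1$1 = - of_real (g t) * r$1$1"
  "gen2 g t r $1$2 = - of_real (g t) / 2 * r$1$2"
  "gen2 g t r $2$1 = - of_real (g t) / 2 * r$2$1"
  "gen2 g t r $2$2 = of_real (g t) * r$1$1"
  by (simp_all add: gen2_def mmult_nth field_simps)



lemma ode_hom:
  fixes y :: "real \<Rightarrow> 'a::real_normed_vector"
  assumes dy: "\<And>t. 0 \<le> t \<Longrightarrow> (y has_vector_derivative g t *\<^sub>R y t) (at t within {0..})"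
    and dG: "\<And>t. 0 \<le> t \<Longrightarrow> (G has_real_derivative g t) (at t within {0..})"
    and t: "0 \<le> t"
  shows "y t = exp (G t - G 0) *\<^sub>R y 0"
proof -
  let ?h = "\<lambda>s. exp (- G s) *\<^sub>R y s"
  have "(?h has_vector_derivative 0) (at s within {0..})" if "s \<in> {0..}" for s
  proof -
    have s: "0 \<le> s" using that by simp
    have "(?h has_vector_derivative (exp (- G s) *\<^sub>R (g s *\<^sub>R y s) + (exp (- G s) * (- g s)) *\<^sub>R y s)) (at s within {0..})"
      by (intro has_vector_derivative_scaleR dy s DERIV_chain2[where f=exp] DERIV_exp derivative_intros dG)
    moreover have "exp (- G s) *\<^sub>R (g s *\<^sub>R y s) + (exp (- G s) * (- g s)) *\<^sub>R y s = 0"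
      by (simp add: scaleR_scaleR algebra_simps)
    ultimately show ?thesis by simp
  qed
  then obtain c where c: "\<And>s. s \<in> {0..} \<Longrightarrow> ?h s = c"
    using has_vector_derivative_zero_constant[where f="?h" and s="{0..}"] convex_real_interval(1) by metis
  have "?h t = ?h 0" using c t by simp
  then have "exp (G t) *\<^sub>R ?h t = exp (G t) *\<^sub>R ?h 0" by simp
  then show ?thesis by (simp add: scaleR_scaleR exp_minus exp_diff field_simps)
qed

lemma ode_const:
  fixes y :: "real \<Rightarrow> 'a::real_normed_vector"
  assumes dy: "\<And>t. 0 \<le> t \<Longrightarrow> (y has_vector_derivative 0) (at t within {0..})"
    and t: "0 \<le> t"
  shows "y t = y 0"
  using ode_hom[of y "\<lambda>_. 0" "\<lambda>_. 0" t] dy t by simp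



definition ent :: "2 \<Rightarrow> 2 \<Rightarrow> complex \<Rightarrow> qmat" where
  "ent p q z = (\<chi> i j. if i = p \<and> j = q then z else 0)"

lemma bl_ent: "bounded_linear (ent p q)"
proof -
  have "linear (ent p q)"
    by (rule linearI) (auto simp: ent_def vec_eq_iff)
  then show ?thesis by (simp add: linear_conv_bounded_linear)
qed

lemma mk_ent: "mk a b c d = ent 1 1 a + ent 1 2 b + ent 2 1 c + ent 2 2 d"
  by (simp add: qmat_eq_iff ent_def)

lemma mk_has_vector_derivative:
  assumes "(a has_vector_derivative a') F" "(b has_vector_derivative b') F"
    "(c has_vector_derivative c') F" "(d has_vector_derivative d') F"
  shows "((\<lambda>s. mk (a s) (b s) (c s) (d s)) has_vector_derivative mk a' b' c' d') F"
  unfolding mk_ent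
  by (intro has_vector_derivative_add bounded_linear.has_vector_derivative[OF bl_ent] assms)

lemma nth_has_vector_derivative:
  fixes i j :: 2 and f :: "real \<Rightarrow> qmat"
  assumes "(f has_vector_derivative f') F"
  shows "((\<lambda>s. f s $ i $ j) has_vector_derivative f' $ i $ j) F"
proof -
  have "bounded_linear (\<lambda>x::qmat. x $ i $ j)"
    by (rule bounded_linear_compose[OF bounded_linear_vec_nth bounded_linear_vec_nth])
  from bounded_linear.has_vector_derivative[where f="\<lambda>x::qmat. x$i$j", OF this assms] show ?thesis by simp
qed

definition comb :: "(real \<Rightarrow> real) \<Rightarrow> (real \<Rightarrow> real) \<Rightarrow> real \<Rightarrow> qmat \<Rightarrow> qmat" where
  "comb g1 g2 t r = gen1 g1 t r + gen2 g2 t r"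

definition expl :: "(real \<Rightarrow> real) \<Rightarrow> (real \<Rightarrow> real) \<Rightarrow> (real \<Rightarrow> real) \<Rightarrow> real \<Rightarrow> qmat \<Rightarrow> qmat" where
  "expl G1 G2 ph t r = (let s0 = r$1$1 + r$2$2; z0 = r$1$1 - r$2$2; u0 = r$1$2 + r$2$1; w0 = r$1$2 - r$2$1;
     z = of_real (exp (-(2 * G1 t + G2 t))) * z0 + of_real (ph t) * s0;
     u = of_real (exp (- G2 t / 2)) * u0; w = of_real (exp (-(2 * G1 t + G2 t / 2))) * w0
    in mk ((s0+z)/2) ((u+w)/2) ((u-w)/2) ((s0-z)/2))"

locale odes =
  fixes g1 g2 G1 G2 ph :: "real \<Rightarrow> real"
  assumes G10: "G1 0 = 0" and G20: "G2 0 = 0" and ph0: "ph 0 = 0"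
    and dG1: "\<And>t. 0 \<le> t \<Longrightarrow> (G1 has_real_derivative g1 t) (at t within {0..})"
    and dG2: "\<And>t. 0 \<le> t \<Longrightarrow> (G2 has_real_derivative g2 t) (at t within {0..})"
    and dph: "\<And>t. 0 \<le> t \<Longrightarrow> (ph has_real_derivative (- (2 * g1 t + g2 t) * ph t - g2 t)) (at t within {0..})"
begin

lemma cder: "(f has_real_derivative f') F \<Longrightarrow> ((\<lambda>s. complex_of_real (f s)) has_vector_derivative complex_of_real f') F"
  using has_vector_derivative_of_real[of f f' F] by (simp add: has_real_derivative_iff_has_vector_derivative)

lemma expl_solves: "solves (comb g1 g2) (expl G1 G2 ph)"
  unfolding solves_def
proof (intro conjI allI impI)
  show "expl G1 G2 ph 0 = id"
    by (auto simp: fun_eq_iff expl_def G10 G20 ph0 qmat_eq_iff Let_def field_simps)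
  fix t :: real and r :: qmat assume t: "0 \<le> t"
  define s0 where "s0 = r$1$1 + r$2$2"
  define z0 where "z0 = r$1$1 - r$2$2"
  define u0 where "u0 = r$1$2 + r$2$1"
  define w0 where "w0 = r$1$2 - r$2$1"
  define eE where "eE = (\<lambda>t. exp (-(2 * G1 t + G2 t)))"
  define eU where "eU = (\<lambda>t. exp (- G2 t / 2))"
  define eW where "eW = (\<lambda>t. exp (-(2 * G1 t + G2 t / 2)))"
  have ex: "expl G1 G2 ph s r = mk ((s0 + (of_real (eE s) * z0 + of_real (ph s) * s0))/2)
      ((of_real (eU s) * u0 + of_real (eW s) * w0)/2) ((of_real (eU s) * u0 - of_real (eW s) * w0)/2)
      ((s0 - (of_real (eE s) * z0 + of_real (ph s) * s0))/2)" for s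
    by (simp add: expl_def s0_def z0_def u0_def w0_def eE_def eU_def eW_def Let_def)
  have dE: "(eE has_real_derivative (eE t * (- (2 * g1 t + g2 t)))) (at t within {0..})"
    unfolding eE_def using dG1[OF t] dG2[OF t] by (auto intro!: derivative_eq_intros)
  have dU: "(eU has_real_derivative (eU t * (- g2 t / 2))) (at t within {0..})"
    unfolding eU_def using dG1[OF t] dG2[OF t] by (auto intro!: derivative_eq_intros)
  have dW: "(eW has_real_derivative (eW t * (-(2 * g1 t + g2 t / 2)))) (at t within {0..})"
    unfolding eW_def using dG1[OF t] dG2[OF t] by (auto intro!: derivative_eq_intros)
  note d = cder[OF dE] cder[OF dU] cder[OF dW] cder[OF dph[OF t]]
  have "((\<lambda>s. expl G1 G2 ph s r) has_vector_derivative
     mk ((0 + (of_real (eE t * (- (2 * g1 t + g2 t))) * z0 + of_real (- (2 * g1 t + g2 t) * ph t - g2 t) * s0))/2)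
      ((of_real (eU t * (- g2 t / 2)) * u0 + of_real (eW t * (-(2 * g1 t + g2 t / 2))) * w0)/2)
      ((of_real (eU t * (- g2 t / 2)) * u0 - of_real (eW t * (-(2 * g1 t + g2 t / 2))) * w0)/2)
      ((0 - (of_real (eE t * (- (2 * g1 t + g2 t))) * z0 + of_real (- (2 * g1 t + g2 t) * ph t - g2 t) * s0))/2))
     (at t within {0..})"
    unfolding ex
    by (intro mk_has_vector_derivative derivative_intros d)
  moreover have "mk ((0 + (of_real (eE t * (- (2 * g1 t + g2 t))) * z0 + of_real (- (2 * g1 t + g2 t) * ph t - g2 t) * s0))/2)
      ((of_real (eU t * (- g2 t / 2)) * u0 + of_real (eW t * (-(2 * g1 t + g2 t / 2))) * w0)/2)
      ((of_real (eU t * (- g2 t / 2)) * u0 - of_real (eW t * (-(2 * g1 t + g2 t / 2))) * w0)/2)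
      ((0 - (of_real (eE t * (- (2 * g1 t + g2 t))) * z0 + of_real (- (2 * g1 t + g2 t) * ph t - g2 t) * s0))/2)
    = comb g1 g2 t (expl G1 G2 ph t r)"
    unfolding ex by (simp add: comb_def qmat_eq_iff field_simps) (simp add: algebra_simps)?
  ultimately show "((\<lambda>s. expl G1 G2 ph s r) has_vector_derivative comb g1 g2 t (expl G1 G2 ph t r)) (at t within {0..})"
    by simp
qed

end


lemma vd_eq: "(f has_vector_derivative D) F \<Longrightarrow> D = D' \<Longrightarrow> (f has_vector_derivative D') F" by simp

context odes begin

lemma expl_unique:
  assumes sol: "solves (comb g1 g2) L" and t: "0 \<le> t"
  shows "L t r = expl G1 G2 ph t r"
proof -
  define a where "a = (\<lambda>s. L s r $ 1 $ 1)"
  define b where "b = (\<lambda>s. L s r $ 1 $ 2)"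
  define c where "c = (\<lambda>s. L s r $ 2 $ 1)"
  define d where "d = (\<lambda>s. L s r $ 2 $ 2)"
  have L0: "L 0 r = r" using sol by (simp add: solves_def)
  have dL: "((\<lambda>s. L s r) has_vector_derivative comb g1 g2 s (L s r)) (at s within {0..})" if "0 \<le> s" for s
    using sol that by (simp add: solves_def)
  have da: "(a has_vector_derivative (of_real (g1 s) * (d s - a s) - of_real (g2 s) * a s)) (at s within {0..})"
    if "0 \<le> s" for s
    using nth_has_vector_derivative[OF dL[OF that], of 1 1] by (simp add: a_def b_def c_def d_def comb_def)
  have db: "(b has_vector_derivative (of_real (g1 s) * (c s - b s) - of_real (g2 s) / 2 * b s)) (at s within {0..})"
    if "0 \<le> s" for s
    using nth_has_vector_derivative[OF dL[OF that], of 1 2] by (simp add: a_def b_def c_def d_def comb_def)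
  have dc: "(c has_vector_derivative (of_real (g1 s) * (b s - c s) - of_real (g2 s) / 2 * c s)) (at s within {0..})"
    if "0 \<le> s" for s
    using nth_has_vector_derivative[OF dL[OF that], of 2 1] by (simp add: a_def b_def c_def d_def comb_def)
  have dd: "(d has_vector_derivative (of_real (g1 s) * (a s - d s) + of_real (g2 s) * a s)) (at s within {0..})"
    if "0 \<le> s" for s
    using nth_has_vector_derivative[OF dL[OF that], of 2 2] by (simp add: a_def b_def c_def d_def comb_def)
  define s0 where "s0 = r$1$1 + r$2$2"
  define z0 where "z0 = r$1$1 - r$2$2"
  define u0 where "u0 = r$1$2 + r$2$1"
  define w0 where "w0 = r$1$2 - r$2$1"
  define eE where "eE = (\<lambda>t. exp (-(2 * G1 t + G2 t)))"
  define eU where "eU = (\<lambda>t. exp (- G2 t / 2))"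
  define eW where "eW = (\<lambda>t. exp (-(2 * G1 t + G2 t / 2)))"
  have dE: "(eE has_real_derivative (eE s * (- (2 * g1 s + g2 s)))) (at s within {0..})" if s: "0 \<le> s" for s
    unfolding eE_def using dG1[OF s] dG2[OF s] by (auto intro!: derivative_eq_intros)
  have dU: "(eU has_real_derivative (eU s * (- g2 s / 2))) (at s within {0..})" if s: "0 \<le> s" for s
    unfolding eU_def using dG1[OF s] dG2[OF s] by (auto intro!: derivative_eq_intros)
  have dW: "(eW has_real_derivative (eW s * (-(2 * g1 s + g2 s / 2)))) (at s within {0..})" if s: "0 \<le> s" for s
    unfolding eW_def using dG1[OF s] dG2[OF s] by (auto intro!: derivative_eq_intros)
  have a0: "a 0 = r$1$1" "b 0 = r$1$2" "c 0 = r$2$1" "d 0 = r$2$2"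
    by (simp_all add: a_def b_def c_def d_def L0)
  have S: "a s + d s = s0" if "0 \<le> s" for s
  proof -
    have "(\<lambda>s. a s + d s) s = (\<lambda>s. a s + d s) 0"
      by (rule ode_const[OF _ that], rule vd_eq, rule has_vector_derivative_add[OF da dd], simp_all add: algebra_simps)
    then show ?thesis by (simp add: a0 s0_def)
  qed
  define Z where "Z = (\<lambda>s. (a s - d s) - (of_real (eE s) * z0 + of_real (ph s) * s0))"
  have Zt: "Z s = exp ((- (2 * G1 s + G2 s)) - (- (2 * G1 0 + G2 0))) *\<^sub>R Z 0" if s: "0 \<le> s" for s
  proof (rule ode_hom[OF _ _ s])
    fix s :: real assume s: "0 \<le> s"
    show "((\<lambda>s. - (2 * G1 s + G2 s)) has_real_derivative - (2 * g1 s + g2 s)) (at s within {0..})"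
      using dG1[OF s] dG2[OF s] by (auto intro!: derivative_eq_intros)
    show "(Z has_vector_derivative (- (2 * g1 s + g2 s)) *\<^sub>R Z s) (at s within {0..})"
      unfolding Z_def
      apply (rule vd_eq)
       apply (rule has_vector_derivative_diff[OF has_vector_derivative_diff[OF da[OF s] dd[OF s]]])
       apply (rule derivative_intros cder dE dph s)+
      by (simp add: scaleR_conv_of_real algebra_simps flip: S[OF s])
  qed
  define U where "U = (\<lambda>s. (b s + c s) - of_real (eU s) * u0)"
  have Ut: "U s = exp ((- G2 s / 2) - (- G2 0 / 2)) *\<^sub>R U 0" if s: "0 \<le> s" for s
  proof (rule ode_hom[OF _ _ s])
    fix s :: real assume s: "0 \<le> s"
    show "((\<lambda>s. - G2 s / 2) has_real_derivative - g2 s / 2) (at s within {0..})"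
      using dG1[OF s] dG2[OF s] by (auto intro!: derivative_eq_intros)
    show "(U has_vector_derivative (- g2 s / 2) *\<^sub>R U s) (at s within {0..})"
      unfolding U_def
      apply (rule vd_eq)
       apply (rule has_vector_derivative_diff[OF has_vector_derivative_add[OF db[OF s] dc[OF s]]])
       apply (rule derivative_intros cder dU s)+
      by (simp add: scaleR_conv_of_real algebra_simps)
  qed
  define W where "W = (\<lambda>s. (b s - c s) - of_real (eW s) * w0)"
  have Wt: "W s = exp ((-(2 * G1 s + G2 s / 2)) - (-(2 * G1 0 + G2 0 / 2))) *\<^sub>R W 0" if s: "0 \<le> s" for s
  proof (rule ode_hom[OF _ _ s])
    fix s :: real assume s: "0 \<le> s"
    show "((\<lambda>s. -(2 * G1 s + G2 s / 2)) has_real_derivative -(2 * g1 s + g2 s / 2)) (at s within {0..})"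
      using dG1[OF s] dG2[OF s] by (auto intro!: derivative_eq_intros)
    show "(W has_vector_derivative (-(2 * g1 s + g2 s / 2)) *\<^sub>R W s) (at s within {0..})"
      unfolding W_def
      apply (rule vd_eq)
       apply (rule has_vector_derivative_diff[OF has_vector_derivative_diff[OF db[OF s] dc[OF s]]])
       apply (rule derivative_intros cder dW s)+
      by (simp add: scaleR_conv_of_real algebra_simps)
  qed
  have Z0: "Z 0 = 0" "U 0 = 0" "W 0 = 0"
    by (simp_all add: Z_def U_def W_def a0 eE_def eU_def eW_def G10 G20 ph0 z0_def u0_def w0_def)
  have e1: "a t - d t = of_real (eE t) * z0 + of_real (ph t) * s0"
    and e2: "b t + c t = of_real (eU t) * u0" and e3: "b t - c t = of_real (eW t) * w0"
    and e4: "a t + d t = s0"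
    using Zt[OF t] Ut[OF t] Wt[OF t] S[OF t] Z0 by (simp_all add: Z_def U_def W_def)
  have sol2: "x = (q + p) / 2 \<and> y = (q - p) / 2" if "x - y = p" "x + y = q" for x y p q :: complex
    using that by (auto simp: field_simps)
  have ex: "expl G1 G2 ph t r = mk ((s0 + (of_real (eE t) * z0 + of_real (ph t) * s0))/2)
      ((of_real (eU t) * u0 + of_real (eW t) * w0)/2) ((of_real (eU t) * u0 - of_real (eW t) * w0)/2)
      ((s0 - (of_real (eE t) * z0 + of_real (ph t) * s0))/2)"
    by (simp add: expl_def s0_def z0_def u0_def w0_def eE_def eU_def eW_def Let_def)
  show ?thesis
    using sol2[OF e1 e4] sol2[OF e3 e2]
    unfolding ex by (simp add: qmat_eq_iff a_def b_def c_def d_def add.commute)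
qed

end


lemma hform2: "hform (v::complex^2) w = cnj (v$1) * w$1 + cnj (v$2) * w$2"
  by (simp add: hform_def sum_2)

lemma mv_nth: "((A::qmat) *v x) $ i = A$i$1 * x$1 + A$i$2 * x$2"
  by (simp add: matrix_vector_mult_def sum_2)

lemma nonneg_real_add: "nonneg_real x \<Longrightarrow> nonneg_real y \<Longrightarrow> nonneg_real (x + y)"
  by (simp add: nonneg_real_def)

lemma hform_kraus: "hform v ((K ** X ** adj K) *v w) = hform (adj K *v v) (X *v (adj K *v w))"
  by (simp add: hform2 mv_nth mmult_nth algebra_simps)

lemma hform_add: "hform (v::complex^2) (((A::qmat) + B) *v w) = hform v (A *v w) + hform v (B *v w)"
  by (simp add: hform2 matrix_vector_mult_add_rdistrib ring_distribs)

lemma kraus2_cp: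
  assumes "\<And>X. Phi X = K1 ** X ** adj K1 + K2 ** X ** adj K2"
  shows "completely_positive Phi"
  unfolding completely_positive_def
proof (intro allI impI)
  fix k X assume X: "psd_block k X"
  show "psd_block k (\<lambda>i j. Phi (X i j))"
    unfolding psd_block_def
  proof
    fix v :: "nat \<Rightarrow> complex^2"
    have "(\<Sum>i<k. \<Sum>j<k. hform (v i) (Phi (X i j) *v v j)) =
        (\<Sum>i<k. \<Sum>j<k. hform (adj K1 *v v i) (X i j *v (adj K1 *v v j))) +
        (\<Sum>i<k. \<Sum>j<k. hform (adj K2 *v v i) (X i j *v (adj K2 *v v j)))"
      by (simp add: assms hform_add hform_kraus sum.distrib)
    moreover have "nonneg_real (\<Sum>i<k. \<Sum>j<k. hform (adj K1 *v v i) (X i j *v (adj K1 *v v j)))"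
      using X[unfolded psd_block_def, rule_format, of "\<lambda>i. adj K1 *v v i"] by simp
    moreover have "nonneg_real (\<Sum>i<k. \<Sum>j<k. hform (adj K2 *v v i) (X i j *v (adj K2 *v v j)))"
      using X[unfolded psd_block_def, rule_format, of "\<lambda>i. adj K2 *v v i"] by simp
    ultimately show "nonneg_real (\<Sum>i<k. \<Sum>j<k. hform (v i) (Phi (X i j) *v v j))"
      by (simp add: nonneg_real_add)
  qed
qed

lemma expl_linear: "linear (expl G1 G2 ph t)"
  by (rule linearI; simp add: expl_def Let_def qmat_eq_iff; simp add: scaleR_conv_of_real field_simps; simp add: algebra_simps)

lemma expl_tp: "trace_preserving (expl G1 G2 ph t)"
  by (simp add: trace_preserving_def trace_def sum_2 expl_def Let_def field_simps)

lemma cofr_sqrt: "0 \<le> x \<Longrightarrow> complex_of_real (sqrt x) * complex_of_real (sqrt x) = complex_of_real x"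
  by (simp flip: of_real_mult)

lemma expl_cp1:
  assumes "0 \<le> G t"
  shows "completely_positive (expl G (\<lambda>_. 0) (\<lambda>_. 0) t)"
proof (rule kraus2_cp)
  define e where "e = exp (- (2 * G t))"
  have e: "0 < e" "e \<le> 1" using assms by (auto simp: e_def)
  define c1 where "c1 = complex_of_real (sqrt ((1 + e)/2))"
  define c2 where "c2 = complex_of_real (sqrt ((1 - e)/2))"
  have c: "c1 * c1 = of_real ((1+e)/2)" "c2 * c2 = of_real ((1-e)/2)" "cnj c1 = c1" "cnj c2 = c2"
    using e by (simp_all add: c1_def c2_def cofr_sqrt)
  have cc: "c1 * (c1 * x) = of_real ((1+e)/2) * x" "c2 * (c2 * x) = of_real ((1-e)/2) * x" for x
    by (simp_all add: mult.assoc[symmetric] c)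
  fix X
  show "expl G (\<lambda>_. 0) (\<lambda>_. 0) t X = mk c1 0 0 c1 ** X ** adj (mk c1 0 0 c1) + mk 0 c2 c2 0 ** X ** adj (mk 0 c2 c2 0)"
    by (simp add: qmat_eq_iff expl_def Let_def mmult_nth c flip: e_def) (simp add: cc field_simps)
qed

lemma expl_cp2:
  assumes "0 \<le> G t"
  shows "completely_positive (expl (\<lambda>_. 0) G (\<lambda>t. exp (- G t) - 1) t)"
proof (rule kraus2_cp)
  define f where "f = exp (- G t)"
  have f: "0 < f" "f \<le> 1" using assms by (auto simp: f_def)
  define q where "q = complex_of_real (exp (- (G t / 2)))"
  define p where "p = complex_of_real (sqrt (1 - f))"
  have c: "q * q = of_real f" "p * p = of_real (1 - f)" "cnj q = q" "cnj p = p"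
    using f by (simp_all add: q_def p_def cofr_sqrt f_def flip: of_real_mult exp_add)
  have cc: "p * (p * x) = of_real (1 - f) * x" for x
    by (simp_all add: mult.assoc[symmetric] c)
  fix X
  show "expl (\<lambda>_. 0) G (\<lambda>t. exp (- G t) - 1) t X = mk q 0 0 1 ** X ** adj (mk q 0 0 1) + mk 0 0 p 0 ** X ** adj (mk 0 0 p 0)"
    by (simp add: qmat_eq_iff expl_def Let_def mmult_nth c flip: f_def q_def) (simp add: cc c field_simps)
qed



lemma smat_of_real: "smat (complex_of_real r) A = r *\<^sub>R A"
  by (simp add: qmat_eq_iff; simp add: scaleR_conv_of_real)

lemma smat0[simp]: "smat 0 A = 0" by (simp add: qmat_eq_iff)

lemma integral_G:
  assumes dG: "\<And>x. 0 \<le> x \<Longrightarrow> (G has_real_derivative g x) (at x within {0..})"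
    and G0: "G 0 = 0" and t: "0 \<le> t"
  shows "(g has_integral G t) {0..t}"
proof -
  have "(g has_integral (G t - G 0)) {0..t}"
    by (rule fundamental_theorem_of_calculus[OF t])
       (auto simp: has_real_derivative_iff_has_vector_derivative[symmetric] intro!: DERIV_subset[OF dG])
  then show ?thesis by (simp add: G0)
qed

lemma Zint_gen1:
  assumes dG: "\<And>x. 0 \<le> x \<Longrightarrow> (G has_real_derivative g x) (at x within {0..})"
    and G0: "G 0 = 0" and t: "0 \<le> t"
  shows "Zint (gen1 g) t = gen1 (\<lambda>_. G t) 0"
proof
  fix r
  have "((\<lambda>x. g x *\<^sub>R (sigma_x ** r ** sigma_x - r)) has_integral G t *\<^sub>R (sigma_x ** r ** sigma_x - r)) {0..t}"
    by (rule has_integral_scaleR_left[OF integral_G[OF dG G0 t]])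
  then show "Zint (gen1 g) t r = gen1 (\<lambda>_. G t) 0 r"
    unfolding Zint_def gen1_def smat_of_real by (rule integral_unique)
qed

lemma Zint_gen2:
  assumes dG: "\<And>x. 0 \<le> x \<Longrightarrow> (G has_real_derivative g x) (at x within {0..})"
    and G0: "G 0 = 0" and t: "0 \<le> t"
  shows "Zint (gen2 g) t = gen2 (\<lambda>_. G t) 0"
proof
  fix r
  let ?M = "sigma_minus ** r ** sigma_plus
       - smat (1/2) (sigma_plus ** sigma_minus ** r + r ** sigma_plus ** sigma_minus)"
  have "((\<lambda>x. g x *\<^sub>R ?M) has_integral G t *\<^sub>R ?M) {0..t}"
    by (rule has_integral_scaleR_left[OF integral_G[OF dG G0 t]])
  then show "Zint (gen2 g) t r = gen2 (\<lambda>_. G t) 0 r"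
    unfolding Zint_def gen2_def smat_of_real by (rule integral_unique)
qed

lemma comm1: "commutative_family (gen1 g)"
  by (auto simp: commutative_family_def fun_eq_iff qmat_eq_iff algebra_simps)

lemma comm2: "commutative_family (gen2 g)"
  by (auto simp: commutative_family_def fun_eq_iff qmat_eq_iff algebra_simps)

definition kap :: complex where "kap = complex_of_real (inverse (sqrt 2))"
lemma kap: "kap * kap = 1/2" "kap * (kap * x) = x / 2" "cnj kap = kap"
proof -
  have "kap * kap = complex_of_real (inverse (sqrt 2) * inverse (sqrt 2))"
    by (simp add: kap_def)
  also have "inverse (sqrt 2) * inverse (sqrt 2) = (1/2::real)"
    by (simp flip: inverse_mult_distrib)
  finally show kk: "kap * kap = 1/2" by simp
  show "kap * (kap * x) = x / 2" by (simp add: mult.assoc[symmetric] kk)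
  show "cnj kap = kap" by (simp add: kap_def)
qed

lemma psd_D:
  assumes "0 \<le> c"
  shows "psd (\<chi> i j. if i = 1 \<and> j = 1 then complex_of_real c else (0::complex) :: complex^3^3)"
proof -
  have "0 \<le> x * (c * x)" for x :: real
    using assms by (metis mult.left_commute mult_nonneg_nonneg zero_le_square)
  then show ?thesis
    by (simp add: psd_def hform_def matrix_vector_mult_def sum_3 nonneg_real_def)
qed

lemma GKSL1:
  assumes c: "0 \<le> c"
  shows "GKSL_form (gen1 (\<lambda>_. c) 0)"
  unfolding GKSL_form_def
proof (intro exI conjI allI)
  let ?F = "\<lambda>i::3. if i = 1 then mk 0 kap kap 0 else if i = 2 then mk 0 (-\<i>*kap) (\<i>*kap) 0 else mk kap 0 0 (-kap)"
  let ?D = "(\<chi> i j. if i = 1 \<and> j = 1 then complex_of_real (2*c) else (0::complex)) :: complex^3^3"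
  show "adj (0::qmat) = 0" by (simp add: qmat_eq_iff)
  show "orthonormal_traceless_basis ?F"
    by (simp add: orthonormal_traceless_basis_def forall_3 trace_def sum_2 mmult_nth kap)
  show "psd ?D" using psd_D[of "2*c"] c by simp
  fix r
  show "gen1 (\<lambda>_. c) 0 r = smat (- \<i>) (0 ** r - r ** 0) +
      (\<Sum>i\<in>UNIV. \<Sum>j\<in>UNIV. smat (?D$i$j) (?F i ** r ** adj (?F j) -
        smat (1/2) (adj (?F j) ** ?F i ** r + r ** adj (?F j) ** ?F i)))"
    by (simp add: sum_3 qmat_eq_iff mmult_nth kap algebra_simps)
qed

lemma GKSL2:
  assumes c: "0 \<le> c"
  shows "GKSL_form (gen2 (\<lambda>_. c) 0)"
  unfolding GKSL_form_def
proof (intro exI conjI allI)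
  let ?F = "\<lambda>i::3. if i = 1 then mk 0 0 1 0 else if i = 2 then mk 0 1 0 0 else mk kap 0 0 (-kap)"
  let ?D = "(\<chi> i j. if i = 1 \<and> j = 1 then complex_of_real c else (0::complex)) :: complex^3^3"
  show "adj (0::qmat) = 0" by (simp add: qmat_eq_iff)
  show "orthonormal_traceless_basis ?F"
    by (simp add: orthonormal_traceless_basis_def forall_3 trace_def sum_2 mmult_nth kap)
  show "psd ?D" using psd_D[of "c"] c by simp
  fix r
  show "gen2 (\<lambda>_. c) 0 r = smat (- \<i>) (0 ** r - r ** 0) +
      (\<Sum>i\<in>UNIV. \<Sum>j\<in>UNIV. smat (?D$i$j) (?F i ** r ** adj (?F j) -
        smat (1/2) (adj (?F j) ** ?F i ** r + r ** adj (?F j) ** ?F i)))"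
    by (simp add: sum_3 qmat_eq_iff mmult_nth kap algebra_simps)
qed



lemma comb1: "gen1 g = comb g (\<lambda>_. 0)"
  by (auto simp: fun_eq_iff comb_def qmat_eq_iff)

lemma comb2: "gen2 g = comb (\<lambda>_. 0) g"
  by (auto simp: fun_eq_iff comb_def qmat_eq_iff)
lemma comb_eta: "(\<lambda>t r. gen1 g1 t r + gen2 g2 t r) = comb g1 g2"
  by (auto simp: fun_eq_iff comb_def)

lemma rd_eq: "(f has_real_derivative D) F \<Longrightarrow> D = D' \<Longrightarrow> (f has_real_derivative D') F" by simp

lemma gen_SSC1:
  assumes dG: "\<And>x. 0 \<le> x \<Longrightarrow> (G has_real_derivative g x) (at x within {0..})"
    and G0: "G 0 = 0" and Gnn: "\<And>t. 0 \<le> t \<Longrightarrow> 0 \<le> G t"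
  shows "generates_SSC_CPTP (gen1 g)"
proof -
  interpret odes g "\<lambda>_. 0" G "\<lambda>_. 0" "\<lambda>_. 0"
  proof (unfold_locales)
    show "G 0 = 0" by (rule G0)
    show "(0::real) = 0" by simp
    show "(G has_real_derivative g t) (at t within {0..})" if "0 \<le> t" for t using dG that .
    show "((\<lambda>_. 0) has_real_derivative 0) (at t within {0..})" for t by (rule DERIV_const)
    show "((\<lambda>_. 0) has_real_derivative - (2 * g t + 0) * 0 - 0) (at t within {0..})" for t
      using DERIV_const[of 0] by simp
  qed
  show ?thesis
    unfolding generates_SSC_CPTP_def SSC_def
  proof (intro conjI allI impI)
    show "commutative_family (gen1 g)" by (rule comm1)
    fix t :: real assume t: "0 \<le> t"
    have Z: "Zint (gen1 g) t = gen1 (\<lambda>_. G t) 0"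
      by (rule Zint_gen1[where g=g]) (auto intro: dG G0 t)
    show "GKSL_form (Zint (gen1 g) t)"
      unfolding Z by (rule GKSL1[OF Gnn[OF t]])
  next
    show "\<exists>L. solves (gen1 g) L" unfolding comb1 using expl_solves by blast
  next
    fix L and t :: real assume sol: "solves (gen1 g) L" and t: "0 \<le> t"
    have "L t = expl G (\<lambda>_. 0) (\<lambda>_. 0) t"
      by (rule ext, rule expl_unique[OF sol[unfolded comb1] t])
    then show "CPTP (L t)"
      unfolding CPTP_def using expl_linear expl_tp expl_cp1[of G t, OF Gnn[OF t]] by metis
  qed
qed
lemma gen_SSC2:
  assumes dG: "\<And>x. 0 \<le> x \<Longrightarrow> (G has_real_derivative g x) (at x within {0..})"
    and G0: "G 0 = 0" and Gnn: "\<And>t. 0 \<le> t \<Longrightarrow> 0 \<le> G t"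
  shows "generates_SSC_CPTP (gen2 g)"
proof -
  interpret odes "\<lambda>_. 0" g "\<lambda>_. 0" G "\<lambda>t. exp (- G t) - 1"
  proof (unfold_locales)
    show "G 0 = 0" by (rule G0)
    show "exp (- G 0) - 1 = 0" by (simp add: G0)
    show "(0::real) = 0" by simp
    show "(G has_real_derivative g t) (at t within {0..})" if "0 \<le> t" for t using dG that .
    show "((\<lambda>_. 0) has_real_derivative 0) (at t within {0..})" for t by (rule DERIV_const)
    fix t :: real assume t: "0 \<le> t"
    show "((\<lambda>t. exp (- G t) - 1) has_real_derivative - (2 * 0 + g t) * (exp (- G t) - 1) - g t) (at t within {0..})"
      by (rule rd_eq[OF DERIV_diff[OF DERIV_chain2[OF DERIV_exp DERIV_minus[OF dG[OF t]]] DERIV_const]])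
         (simp add: algebra_simps)
  qed
  show ?thesis
    unfolding generates_SSC_CPTP_def SSC_def
  proof (intro conjI allI impI)
    show "commutative_family (gen2 g)" by (rule comm2)
    fix t :: real assume t: "0 \<le> t"
    have Z: "Zint (gen2 g) t = gen2 (\<lambda>_. G t) 0"
      by (rule Zint_gen2[where g=g]) (auto intro: dG G0 t)
    show "GKSL_form (Zint (gen2 g) t)"
      unfolding Z by (rule GKSL2[OF Gnn[OF t]])
  next
    show "\<exists>L. solves (gen2 g) L" unfolding comb2 using expl_solves by blast
  next
    fix L and t :: real assume sol: "solves (gen2 g) L" and t: "0 \<le> t"
    have "L t = expl (\<lambda>_. 0) G (\<lambda>t. exp (- G t) - 1) t"
      by (rule ext, rule expl_unique[OF sol[unfolded comb2] t])
    then show "CPTP (L t)"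
      unfolding CPTP_def using expl_linear expl_tp expl_cp2[of G t, OF Gnn[OF t]] by metis
  qed
qed


lemma int_deriv:
  fixes f :: "real \<Rightarrow> real"
  assumes "continuous_on UNIV f" "0 \<le> t"
  shows "((\<lambda>u. integral {0..u} f) has_real_derivative f t) (at t within {0..})"
proof -
  have "((\<lambda>u. integral {0..u} f) has_real_derivative f t) (at t within {0..t+1})"
    by (rule integral_has_real_derivative) (use assms in \<open>auto intro: continuous_on_subset\<close>)
  moreover have "at t within {0..t+1} = at t within {0..}"
    by (rule at_within_nhd[where S="{..<t+1}"]) auto
  ultimately show ?thesis by simp
qed

lemma ph_exists:
  assumes dE: "\<And>t. (E has_real_derivative k t) (at t)" and ch: "continuous_on UNIV h"
  shows "\<exists>ph. ph 0 = 0 \<and> (\<forall>t\<ge>0. (ph has_real_derivative (- k t * ph t - h t)) (at t within {0..}))"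
proof -
  have cE: "continuous_on UNIV E"
    using dE by (intro continuous_at_imp_continuous_on) (auto intro: DERIV_isCont)
  have cf: "continuous_on UNIV (\<lambda>t. h t * exp (E t))"
    by (intro continuous_intros ch cE)
  define ph where "ph = (\<lambda>t. - exp (- E t) * integral {0..t} (\<lambda>t. h t * exp (E t)))"
  have "(ph has_real_derivative (- k t * ph t - h t)) (at t within {0..})" if t: "0 \<le> t" for t
  proof -
    have d1: "((\<lambda>t. exp (- E t)) has_real_derivative exp (- E t) * (- k t)) (at t within {0..})"
      by (rule DERIV_chain2[OF DERIV_exp DERIV_minus[OF has_field_derivative_at_within[OF dE]]])
    have "(ph has_real_derivative (- (exp (- E t) * (- k t)) * integral {0..t} (\<lambda>t. h t * exp (E t))
         + (- exp (- E t)) * (h t * exp (E t)))) (at t within {0..})"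
      unfolding ph_def
      by (rule rd_eq[OF DERIV_mult[OF DERIV_minus[OF d1] int_deriv[OF cf t]]]) (simp add: algebra_simps)
    moreover have "- (exp (- E t) * (- k t)) * integral {0..t} (\<lambda>t. h t * exp (E t))
         + (- exp (- E t)) * (h t * exp (E t)) = - k t * ph t - h t"
      by (simp add: ph_def exp_minus field_simps)
    ultimately show ?thesis by simp
  qed
  moreover have "ph 0 = 0" by (simp add: ph_def)
  ultimately show ?thesis by blast
qed



lemma nn_cnj: "nonneg_real (cnj w * w)"
  by (simp add: mult.commute[of "cnj w"] complex_mult_cnj nonneg_real_def)

lemma cp_E22:
  assumes "completely_positive Phi"
  shows "0 \<le> Re (Phi (mk 0 0 0 1) $ 1 $ 1)"
proof -
  have "psd_block 1 (\<lambda>i j. mk 0 0 0 1)"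
    by (auto simp: psd_block_def hform2 mv_nth nonneg_real_def intro!: add_nonneg_nonneg)
  then have "psd_block 1 (\<lambda>i j. Phi (mk 0 0 0 1))"
    using assms by (simp add: completely_positive_def)
  then have "nonneg_real (hform (\<chi> a. if a = 1 then 1 else 0) (Phi (mk 0 0 0 1) *v (\<chi> a. if a = 1 then 1 else 0)))"
    unfolding psd_block_def by (drule_tac x="\<lambda>_. \<chi> a. if a = 1 then 1 else 0" in spec) simp
  then show ?thesis by (simp add: hform2 mv_nth nonneg_real_def)
qed

lemma cp_choi:
  assumes "completely_positive Phi"
  shows "0 \<le> x^2 * Re (Phi (mk 1 0 0 0) $ 1 $ 1) + x * y * (Re (Phi (mk 0 1 0 0) $ 1 $ 2) + Re (Phi (mk 0 0 1 0) $ 2 $ 1))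
     + y^2 * Re (Phi (mk 0 0 0 1) $ 2 $ 2)"
proof -
  define X where "X = (\<lambda>(i::nat) (j::nat). if i = 0 then (if j = 0 then mk 1 0 0 0 else mk 0 1 0 0) else (if j = 0 then mk 0 0 1 0 else mk 0 0 0 1))"
  have s2: "(\<Sum>i<2. f i) = f 0 + f (1::nat)" for f :: "nat \<Rightarrow> complex"
    by (simp add: numeral_2_eq_2)
  have "psd_block 2 X"
  proof (unfold psd_block_def, rule allI)
    fix v :: "nat \<Rightarrow> complex^2"
    have "(\<Sum>i<2. \<Sum>j<2. hform (v i) (X i j *v v j)) = cnj (v 0 $ 1 + v 1 $ 2) * (v 0 $ 1 + v 1 $ 2)"
      by (simp add: s2 X_def hform2 mv_nth algebra_simps)
    then show "nonneg_real (\<Sum>i<2. \<Sum>j<2. hform (v i) (X i j *v v j))"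
      by (simp only: nn_cnj)
  qed
  then have P: "psd_block 2 (\<lambda>i j. Phi (X i j))"
    using assms by (simp add: completely_positive_def)
  define w :: "nat \<Rightarrow> complex^2" where "w = (\<lambda>i::nat. if i = 0 then (\<chi> a. if a = 1 then complex_of_real x else 0) else (\<chi> a. if a = 2 then complex_of_real y else 0))"
  have "nonneg_real (\<Sum>i<2. \<Sum>j<2. hform (w i) (Phi (X i j) *v w j))"
    using P[unfolded psd_block_def, THEN spec[where x=w]] by simp
  then show ?thesis
    by (simp add: s2 X_def w_def hform2 mv_nth nonneg_real_def power2_eq_square algebra_simps)
qed



lemma partA:
  "let L1 = gen1 (\<lambda>t. sin (2*t)); L2 = gen2 (\<lambda>t. 1) in
            generates_SSC_CPTP L1 \<and> generates_SSC_CPTP L2 \<and>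
            (\<exists>\<Lambda>. solves (\<lambda>t \<rho>. L1 t \<rho> + L2 t \<rho>) \<Lambda>) \<and>
            (\<forall>\<Lambda>. solves (\<lambda>t \<rho>. L1 t \<rho> + L2 t \<rho>) \<Lambda> \<longrightarrow>
                 \<not> completely_positive (\<Lambda> pi))"
proof -
  have dG1: "((\<lambda>t. (sin t)^2) has_real_derivative sin (2*x)) (at x within {0..})" for x
    by (rule rd_eq, auto intro!: derivative_eq_intros simp: sin_double)
  have dG2: "((\<lambda>t. t) has_real_derivative 1) (at x within {0..})" for x :: real
    by (rule DERIV_ident)
  have S1: "generates_SSC_CPTP (gen1 (\<lambda>t. sin (2*t)))"
    by (rule gen_SSC1[OF dG1]) auto
  have S2: "generates_SSC_CPTP (gen2 (\<lambda>t. 1))"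
    by (rule gen_SSC2[OF dG2]) auto
  define E where "E = (\<lambda>t::real. 2 * (sin t)^2 + t)"
  have dE: "(E has_real_derivative (2 * sin (2*t) + 1)) (at t)" for t
    unfolding E_def by (rule rd_eq, auto intro!: derivative_eq_intros simp: sin_double)
  obtain ph where ph0: "ph 0 = 0" and dph: "\<And>t. 0 \<le> t \<Longrightarrow>
      (ph has_real_derivative (- (2 * sin (2*t) + 1) * ph t - 1)) (at t within {0..})"
    using ph_exists[where E=E and k="\<lambda>t. 2 * sin (2*t) + 1" and h="\<lambda>t. 1", OF dE] by auto
  interpret odes "\<lambda>t. sin (2*t)" "\<lambda>t. 1" "\<lambda>t. (sin t)^2" "\<lambda>t. t" ph
  proof (unfold_locales)
    show "(sin 0)^2 = (0::real)" by simp
    show "(0::real) = 0" by simp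
    show "ph 0 = 0" by (rule ph0)
  qed (use dG1 dG2 dph in auto)
  define D where "D = (\<lambda>t. exp (E t) * ph t + exp t)"
  have dD: "(D has_real_derivative (exp x - exp (E x))) (at x within {0..})" if x: "0 \<le> x" for x
    unfolding D_def
    by (rule rd_eq[OF DERIV_add[OF DERIV_mult[OF DERIV_chain2[OF DERIV_exp has_field_derivative_at_within[OF dE]] dph[OF x]]
        has_field_derivative_at_within[OF DERIV_exp]]]) (simp add: algebra_simps)
  have dD': "(D has_derivative (*) (exp x - exp (E x))) (at x within {0..pi})" if "0 \<le> x" "x \<le> pi" for x
    using DERIV_subset[OF dD[OF that(1)], of "{0..pi}"] by (auto simp: has_field_derivative_def)
  obtain xi where xi: "xi \<in> {0<..<pi}" and mv: "D pi - D 0 = (exp xi - exp (E xi)) * (pi - 0)"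
    using mvt_simple[OF pi_gt_zero dD'] by blast
  have "0 < sin xi" using xi by (auto intro: sin_gt_zero)
  then have "xi < E xi" by (simp add: E_def)
  then have n: "exp xi - exp (E xi) < 0" by simp
  have "(exp xi - exp (E xi)) * pi < 0" using n pi_gt_zero by (rule mult_neg_pos)
  with mv have "D pi < D 0" by simp
  then have key: "exp pi * (ph pi + 1) < 1" by (simp add: D_def E_def ph0 algebra_simps)
  have key2: "1 - exp (- pi) + ph pi < 0"
  proof -
    have "ph pi + 1 < exp (- pi)" using key by (simp add: exp_minus field_simps)
    then show ?thesis by simp
  qed
  show ?thesis
    unfolding Let_def comb_eta
  proof (intro conjI allI impI S1 S2)
    show "\<exists>L. solves (comb (\<lambda>t. sin (2 * t)) (\<lambda>t. 1)) L" using expl_solves by blast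
    fix L assume sol: "solves (comb (\<lambda>t. sin (2 * t)) (\<lambda>t. 1)) L"
    have Lpi: "L pi = expl (\<lambda>t. (sin t)^2) (\<lambda>t. t) ph pi"
      by (rule ext, rule expl_unique[OF sol]) simp
    show "\<not> completely_positive (L pi)"
    proof
      assume "completely_positive (L pi)"
      from cp_E22[OF this] have "0 \<le> Re (L pi (mk 0 0 0 1) $ 1 $ 1)" .
      also have "Re (L pi (mk 0 0 0 1) $ 1 $ 1) = (1 - exp (- pi) + ph pi) / 2"
        unfolding Lpi by (simp add: expl_def Let_def)
      finally show False using key2 by simp
    qed
  qed
qed



lemma partB:
  "let L1 = gen1 (\<lambda>t. 1/2); L2 = gen2 (\<lambda>t. sin t) in
            generates_SSC_CPTP L1 \<and> generates_SSC_CPTP L2 \<and>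
            (\<exists>\<Lambda>. solves (\<lambda>t \<rho>. L1 t \<rho> + L2 t \<rho>) \<Lambda>) \<and>
            (\<forall>\<Lambda>. solves (\<lambda>t \<rho>. L1 t \<rho> + L2 t \<rho>) \<Lambda> \<longrightarrow>
                 \<not> completely_positive (\<Lambda> (2*pi)))"
proof -
  have dG1: "((\<lambda>t. t/2) has_real_derivative 1/2) (at x within {0..})" for x :: real
    by (rule rd_eq, auto intro!: derivative_eq_intros)
  have dG2: "((\<lambda>t. 1 - cos t) has_real_derivative sin x) (at x within {0..})" for x
    by (rule rd_eq, auto intro!: derivative_eq_intros)
  have S1: "generates_SSC_CPTP (gen1 (\<lambda>t. 1/2))"
    by (rule gen_SSC1[OF dG1]) auto
  have S2: "generates_SSC_CPTP (gen2 sin)"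
    by (rule gen_SSC2[OF dG2]) auto
  define E where "E = (\<lambda>t::real. 2 * (t/2) + (1 - cos t))"
  have dE: "(E has_real_derivative (2 * (1/2) + sin t)) (at t)" for t
    unfolding E_def by (rule rd_eq, auto intro!: derivative_eq_intros)
  obtain ph where ph0: "ph 0 = 0" and dph: "\<And>t. 0 \<le> t \<Longrightarrow>
      (ph has_real_derivative (- (2 * (1/2) + sin t) * ph t - sin t)) (at t within {0..})"
    using ph_exists[where E=E and k="\<lambda>t. 2 * (1/2) + sin t" and h="sin", OF dE] continuous_on_sin[OF continuous_on_id]
    by auto
  interpret odes "\<lambda>t. 1/2" sin "\<lambda>t. t/2" "\<lambda>t. 1 - cos t" ph
  proof (unfold_locales)
    show "0/2 = (0::real)" by simp
    show "1 - cos 0 = (0::real)" by simp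
    show "ph 0 = 0" by (rule ph0)
  qed (use dG1 dG2 dph in auto)
  define D where "D = (\<lambda>t. exp (E t) * ph t + exp (E t) - exp t)"
  have dD: "(D has_real_derivative (exp (E x) - exp x)) (at x within {0..})" if x: "0 \<le> x" for x
    unfolding D_def
    by (rule rd_eq[OF DERIV_diff[OF DERIV_add[OF DERIV_mult[OF DERIV_chain2[OF DERIV_exp has_field_derivative_at_within[OF dE]] dph[OF x]]
        DERIV_chain2[OF DERIV_exp has_field_derivative_at_within[OF dE]]]
        has_field_derivative_at_within[OF DERIV_exp]]]) (simp add: algebra_simps)
  have dD': "(D has_derivative (*) (exp (E x) - exp x)) (at x within {0..2*pi})" if "0 \<le> x" "x \<le> 2*pi" for x
    using DERIV_subset[OF dD[OF that(1)], of "{0..2*pi}"] by (auto simp: has_field_derivative_def)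
  obtain xi where xi: "xi \<in> {0<..<2*pi}" and mv: "D (2*pi) - D 0 = (exp (E xi) - exp xi) * (2*pi - 0)"
    using mvt_simple[OF _ dD'] by auto
  have "0 < sin (xi/2)" using xi by (auto intro: sin_gt_zero)
  then have "cos xi < 1" using cos_double_sin[of "xi/2"] by simp
  then have "xi < E xi" by (simp add: E_def)
  then have n: "0 < exp (E xi) - exp xi" by simp
  have p: "0 < (exp (E xi) - exp xi) * (2*pi)" using n pi_gt_zero by simp
  have mv': "D (2*pi) - D 0 = (exp (E xi) - exp xi) * (2*pi)" using mv by simp
  have "D 0 < D (2*pi)" using p mv' by linarith
  then have "0 < exp (2*pi) * ph (2*pi)" by (simp add: D_def E_def ph0 algebra_simps)
  then have phpos: "0 < ph (2*pi)" by (simp add: zero_less_mult_iff)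
  show ?thesis
    unfolding Let_def comb_eta
  proof (intro conjI allI impI S1 S2)
    show "\<exists>L. solves (comb (\<lambda>t. 1/2) sin) L" using expl_solves by blast
    fix L assume sol: "solves (comb (\<lambda>t. 1/2) sin) L"
    have LT: "L (2*pi) = expl (\<lambda>t. t/2) (\<lambda>t. 1 - cos t) ph (2*pi)"
      by (rule ext, rule expl_unique[OF sol]) simp
    define e where "e = exp (- (2*pi))"
    define b where "b = (1 + e) / 2"
    define d where "d = ph (2*pi) / 2"
    have v: "Re (L (2*pi) (mk 1 0 0 0) $ 1 $ 1) = b + d"
      "Re (L (2*pi) (mk 0 0 0 1) $ 2 $ 2) = b - d"
      "Re (L (2*pi) (mk 0 1 0 0) $ 1 $ 2) = b"
      "Re (L (2*pi) (mk 0 0 1 0) $ 2 $ 1) = b"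
      unfolding LT by (simp_all add: expl_def Let_def b_def d_def e_def field_simps)
    have bp: "0 < b" by (simp add: b_def e_def add_pos_pos)
    have dp: "0 < d" using phpos by (simp add: d_def)
    show "\<not> completely_positive (L (2*pi))"
    proof
      assume "completely_positive (L (2*pi))"
      from cp_choi[OF this, of b "- (b + d)"]
      have "0 \<le> b^2 * (b + d) + b * (- (b + d)) * (b + b) + (- (b + d))^2 * (b - d)"
        by (simp only: v)
      also have "\<dots> = - ((b + d) * d^2)" by (simp add: power2_eq_square algebra_simps)
      also have "\<dots> < 0" using bp dp by simp
      finally show False by simp
    qed
  qed
qed


theorem mainTheorem3:
  shows "(let L1 = gen1 (\<lambda>t. sin (2*t)); L2 = gen2 (\<lambda>t. 1) in
            generates_SSC_CPTP L1 \<and> generates_SSC_CPTP L2 \<and>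
            (\<exists>\<Lambda>. solves (\<lambda>t \<rho>. L1 t \<rho> + L2 t \<rho>) \<Lambda>) \<and>
            (\<forall>\<Lambda>. solves (\<lambda>t \<rho>. L1 t \<rho> + L2 t \<rho>) \<Lambda> \<longrightarrow>
                 \<not> completely_positive (\<Lambda> pi)))
       \<and> (let L1 = gen1 (\<lambda>t. 1/2); L2 = gen2 (\<lambda>t. sin t) in
            generates_SSC_CPTP L1 \<and> generates_SSC_CPTP L2 \<and>
            (\<exists>\<Lambda>. solves (\<lambda>t \<rho>. L1 t \<rho> + L2 t \<rho>) \<Lambda>) \<and>
            (\<forall>\<Lambda>. solves (\<lambda>t \<rho>. L1 t \<rho> + L2 t \<rho>) \<Lambda> \<longrightarrow>
                 \<not> completely_positive (\<Lambda> (2*pi))))"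
  using partA partB by (rule conjI)

end
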